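(* Let $m$ be even and let $\mathbb{A}\in T_{m,n}$ be a $Z$ tensor. If $\mathbb{A}$ is a $B$ tensor, then $\mathbb{A}$ is a $P$ tensor. If $\mathbb{A}$ is a $B_0$ tensor, then $\mathbb{A}$ is a $P_0$ tensor.
   Context: $T_{m,n}$ denotes the set of real $m$th order $n$-dimensional tensors $\mathbb{A}=(a_{i_1i_2\ldots i_m})$ with $i_j\in[n]=\{1,\ldots,n\}$. $\mathbb{A}$ is a $Z$ tensor if $a_{i_1\ldots i_m}\le0$ whenever $(i_1,\ldots,i_m)$ is not of the form $(i,\ldots,i)$. For $x\in\mathbb{R}^n$, $(\mathbb{A}x^{m-1})_i=\sum_{i_2,\ldots,i_m=1}^n a_{ii_2\ldots i_m}x_{i_2}\cdots x_{i_m}$. $\mathbb{A}$ is a $P$ tensor if for every nonzero $x\in\mathbb{R}^n$, $\max_{i\in[n]}x_i(\mathbb{A}x^{m-1})_i>0$; it is a $P_0$ tensor if for every nonzero $x\in\mathbb{R}^n$ there is $i\in[n]$ with $x_i\ne0$ and $x_i(\mathbb{A}x^{m-1})_i\ge0$. $\mathbb{A}$ is a $B$ tensor if for all $i\in[n]$, $\sum_{i_2,\ldots,i_m=1}^n a_{ii_2\ldots i_m}>0$ and $\frac{1}{n^{m-1}}\sum_{i_2,\ldots,i_m=1}^n a_{ii_2\ldots i_m}>a_{ij_2\ldots j_m}$ for all $(j_2,\ldots,j_m)\neq(i,\ldots,i)$. $\mathbb{A}$ is a $B_0$ tensor if the same two conditions hold with $\ge$ in place of $>$. *)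

theory Defs
  imports "HOL-Analysis.Analysis"
begin

text \<open>A real m-th order n-dimensional tensor is represented as a function
  A :: nat list \<Rightarrow> real; its entry a_{i1...im} is A [i1,...,im], where indices
  are taken from {0..<n} (0-based) and index lists have length m.
  Values of A outside such lists are irrelevant. Vectors x in R^n are functions
  nat \<Rightarrow> real, only x 0, ..., x (n-1) being relevant.\<close>

definition idx_tuples :: "nat \<Rightarrow> nat \<Rightarrow> nat list set" where
  "idx_tuples k n = {js. length js = k \<and> set js \<subseteq> {..<n}}"

definition tensor_apply :: "nat \<Rightarrow> nat \<Rightarrow> (nat list \<Rightarrow> real) \<Rightarrow> (nat \<Rightarrow> real) \<Rightarrow> nat \<Rightarrow> real" where
  "tensor_apply m n A x i = (\<Sum>js\<in>idx_tuples (m - 1) n. A (i # js) * prod_list (map x js))"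

definition nonzero_vec :: "nat \<Rightarrow> (nat \<Rightarrow> real) \<Rightarrow> bool" where
  "nonzero_vec n x \<longleftrightarrow> (\<exists>i<n. x i \<noteq> 0)"

definition Z_tensor :: "nat \<Rightarrow> nat \<Rightarrow> (nat list \<Rightarrow> real) \<Rightarrow> bool" where
  "Z_tensor m n A \<longleftrightarrow> (\<forall>is\<in>idx_tuples m n. (\<forall>i. is \<noteq> replicate m i) \<longrightarrow> A is \<le> 0)"

definition P_tensor :: "nat \<Rightarrow> nat \<Rightarrow> (nat list \<Rightarrow> real) \<Rightarrow> bool" where
  "P_tensor m n A \<longleftrightarrow> (\<forall>x. nonzero_vec n x \<longrightarrow> (\<exists>i<n. x i * tensor_apply m n A x i > 0))"

definition P0_tensor :: "nat \<Rightarrow> nat \<Rightarrow> (nat list \<Rightarrow> real) \<Rightarrow> bool" where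
  "P0_tensor m n A \<longleftrightarrow> (\<forall>x. nonzero_vec n x \<longrightarrow>
      (\<exists>i<n. x i \<noteq> 0 \<and> x i * tensor_apply m n A x i \<ge> 0))"

definition row_sum :: "nat \<Rightarrow> nat \<Rightarrow> (nat list \<Rightarrow> real) \<Rightarrow> nat \<Rightarrow> real" where
  "row_sum m n A i = (\<Sum>js\<in>idx_tuples (m - 1) n. A (i # js))"

definition B_tensor :: "nat \<Rightarrow> nat \<Rightarrow> (nat list \<Rightarrow> real) \<Rightarrow> bool" where
  "B_tensor m n A \<longleftrightarrow> (\<forall>i<n. row_sum m n A i > 0 \<and>
      (\<forall>js\<in>idx_tuples (m - 1) n. js \<noteq> replicate (m - 1) i \<longrightarrow>
          row_sum m n A i / real n ^ (m - 1) > A (i # js)))"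

definition B0_tensor :: "nat \<Rightarrow> nat \<Rightarrow> (nat list \<Rightarrow> real) \<Rightarrow> bool" where
  "B0_tensor m n A \<longleftrightarrow> (\<forall>i<n. row_sum m n A i \<ge> 0 \<and>
      (\<forall>js\<in>idx_tuples (m - 1) n. js \<noteq> replicate (m - 1) i \<longrightarrow>
          row_sum m n A i / real n ^ (m - 1) \<ge> A (i # js)))"

end

theory Submission
  imports Defs
begin

lemma prod_bound:
  fixes x :: "nat \<Rightarrow> real"
  assumes "\<forall>j<n. \<bar>x j\<bar> \<le> c" "set js \<subseteq> {..<n}"
  shows "\<bar>prod_list (map x js)\<bar> \<le> c ^ length js"
  using assms(2)
proof (induction js)
  case Nil then show ?case by simp
next
  case (Cons a js)
  have "\<bar>x a\<bar> \<le> c" using assms(1) Cons.prems by auto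
  moreover have "\<bar>prod_list (map x js)\<bar> \<le> c ^ length js" using Cons by auto
  ultimately show ?case by (simp add: abs_mult mult_mono')
qed

lemma key:
  fixes m n :: nat and A :: "nat list \<Rightarrow> real"
  assumes "m \<ge> 2" "even m" "Z_tensor m n A" "i < n" "\<forall>j<n. \<bar>x j\<bar> \<le> \<bar>x i\<bar>"
  shows "x i * tensor_apply m n A x i \<ge> row_sum m n A i * \<bar>x i\<bar> ^ m"
proof -
  let ?M = "\<bar>x i\<bar> ^ m"
  have trm: "A (i # js) * ?M \<le> A (i # js) * (x i * prod_list (map x js))"
    if js: "js \<in> idx_tuples (m - 1) n" for js
  proof (cases "js = replicate (m - 1) i")
    case True
    have "x i * prod_list (map x js) = x i ^ m"
      using True assms(1) by (simp add: power_Suc[symmetric])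
    also have "\<dots> = ?M" using assms(2) by (simp add: power_even_abs)
    finally show ?thesis by simp
  next
    case False
    have len: "length js = m - 1" and sub: "set js \<subseteq> {..<n}" using js by (auto simp: idx_tuples_def)
    have "i # js \<in> idx_tuples m n" using len sub assms(1,4) by (auto simp: idx_tuples_def)
    moreover have "\<forall>k. i # js \<noteq> replicate m k"
    proof
      fix k show "i # js \<noteq> replicate m k"
      proof
        assume h: "i # js = replicate m k"
        obtain m' where m': "m = Suc m'" using assms(1) by (cases m) auto
        from h m' have "k = i" "js = replicate m' k" by auto
        with False m' show False by simp
      qed
    qed
    ultimately have A0: "A (i # js) \<le> 0" using assms(3) by (auto simp: Z_tensor_def)
    have "\<bar>prod_list (map x js)\<bar> \<le> \<bar>x i\<bar> ^ (m - 1)"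
      using prod_bound[OF assms(5) sub] len by simp
    hence "\<bar>x i * prod_list (map x js)\<bar> \<le> \<bar>x i\<bar> * \<bar>x i\<bar> ^ (m - 1)"
      by (simp add: abs_mult mult_left_mono)
    also have "\<dots> = ?M" using assms(1) by (simp add: power_Suc[symmetric])
    finally have "x i * prod_list (map x js) \<le> ?M" by simp
    thus ?thesis using A0 by (simp add: mult_left_mono_neg)
  qed
  have "row_sum m n A i * ?M = (\<Sum>js\<in>idx_tuples (m - 1) n. A (i # js) * ?M)"
    by (simp add: row_sum_def sum_distrib_right)
  also have "\<dots> \<le> (\<Sum>js\<in>idx_tuples (m - 1) n. A (i # js) * (x i * prod_list (map x js)))"
    by (rule sum_mono) (rule trm)
  also have "\<dots> = x i * tensor_apply m n A x i"
    by (simp add: tensor_apply_def sum_distrib_left mult_ac)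
  finally show ?thesis .
qed

lemma maxidx:
  fixes x :: "nat \<Rightarrow> real"
  assumes "nonzero_vec n x"
  obtains i where "i < n" "\<forall>j<n. \<bar>x j\<bar> \<le> \<bar>x i\<bar>" "x i \<noteq> 0"
proof -
  obtain j where j: "j < n" "x j \<noteq> 0" using assms by (auto simp: nonzero_vec_def)
  have "finite ((\<lambda>k. \<bar>x k\<bar>) ` {..<n})" "(\<lambda>k. \<bar>x k\<bar>) ` {..<n} \<noteq> {}" using j by auto
  then have "Max ((\<lambda>k. \<bar>x k\<bar>) ` {..<n}) \<in> (\<lambda>k. \<bar>x k\<bar>) ` {..<n}" by (rule Max_in)
  then obtain i where i: "i < n" "\<bar>x i\<bar> = Max ((\<lambda>k. \<bar>x k\<bar>) ` {..<n})" by auto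
  have all: "\<forall>k<n. \<bar>x k\<bar> \<le> \<bar>x i\<bar>" using i by auto
  have "x i \<noteq> 0" using all j by fastforce
  with i all show ?thesis using that by blast
qed

theorem theorem3p6:
  fixes m n :: nat and A :: "nat list \<Rightarrow> real"
  assumes "m \<ge> 2" and "even m" and "Z_tensor m n A"
  shows "(B_tensor m n A \<longrightarrow> P_tensor m n A) \<and> (B0_tensor m n A \<longrightarrow> P0_tensor m n A)"
proof (intro conjI impI)
  assume B: "B_tensor m n A"
  show "P_tensor m n A" unfolding P_tensor_def
  proof (intro allI impI)
    fix x assume "nonzero_vec n x"
    then obtain i where i: "i < n" "\<forall>j<n. \<bar>x j\<bar> \<le> \<bar>x i\<bar>" "x i \<noteq> 0" by (rule maxidx)
    have "row_sum m n A i > 0" using B i by (auto simp: B_tensor_def)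
    moreover have "\<bar>x i\<bar> ^ m > 0" using i by simp
    ultimately have "row_sum m n A i * \<bar>x i\<bar> ^ m > 0" by simp
    with key[OF assms i(1,2)] show "\<exists>i<n. x i * tensor_apply m n A x i > 0"
      using i(1) by force
  qed
next
  assume B: "B0_tensor m n A"
  show "P0_tensor m n A" unfolding P0_tensor_def
  proof (intro allI impI)
    fix x assume "nonzero_vec n x"
    then obtain i where i: "i < n" "\<forall>j<n. \<bar>x j\<bar> \<le> \<bar>x i\<bar>" "x i \<noteq> 0" by (rule maxidx)
    have "row_sum m n A i \<ge> 0" using B i by (auto simp: B0_tensor_def)
    hence "row_sum m n A i * \<bar>x i\<bar> ^ m \<ge> 0" by simp
    with key[OF assms i(1,2)] show "\<exists>i<n. x i \<noteq> 0 \<and> x i * tensor_apply m n A x i \<ge> 0"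
      using i by force
  qed
qed

end
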